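(* For each $1\le n\le\omega$: (1) $X_n^{\mathrm{inj}}$ is a comeager subset of $X_n$ and is invariant under the action $a_n$; (2) the orbit equivalence relation of $a_n$ restricted to $X_n^{\mathrm{inj}}$ equals $F_n\restriction X_n^{\mathrm{inj}}$.
   Context: Let $\mathbb N=\{0,1,2,\dots\}$ and identify $2^{\mathbb N}$ with $\mathcal P(\mathbb N)$. For $1\le m\le\omega$ and $x\in((2^{\mathbb N})^{\mathbb N})^m$ define recursively: $A^x_1=\{x(0)(k):k\in\mathbb N\}\subseteq 2^{\mathbb N}$; for $1\le j<m$ and $l\in\mathbb N$, $a^{x,l}_1=\{x(0)(k):x(1)(l)(k)=1\}$ and $a^{x,l}_{j}=\{a^{x,k}_{j-1}:x(j)(l)(k)=1\}$ for $j\ge 2$; and $A^x_{j+1}=\{a^{x,k}_j:k\in\mathbb N\}$ for $1\le j<m$. Let $X_1=(2^{\mathbb N})^{\mathbb N}$, and for $2\le n\le\omega$ let $X_n$ be the set of $x\in((2^{\mathbb N})^{\mathbb N})^n$ such that for every $1\le i<n$: (1) for every $m$ there is $k$ with $x(i)(k)(m)=1$; (2) for every $k$ there is $m$ with $x(i)(k)(m)=1$; (3) for all $k,l_1,l_2$, if $x(i-1)(l_1)=x(i-1)(l_2)$ then $x(i)(k)(l_1)=x(i)(k)(l_2)$. For $1\le n<\omega$, $F_n$ on $X_n$ is $x\mathrel{F_n}y\iff A^x_n=A^y_n$; $F_\omega$ on $X_\omega$ is $x\mathrel{F_\omega}y\iff A^x_j=A^y_j$ for all $1\le j<\omega$. Actions: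 $S_\infty$ is the group of permutations of $\mathbb N$. For $g\in S_\infty$ and $z\in(2^{\mathbb N})^{\mathbb N}$ let $(g\cdot_a z)(m)=z(g^{-1}(m))$. For $(g,h)\in S_\infty\times S_\infty$ and $z\in(2^{\mathbb N})^{\mathbb N}$ let $((g,h)\cdot_c z)(m)(j)=z(h^{-1}(m))(g^{-1}(j))$. The action $a_n$ of $(S_\infty)^n$ on $((2^{\mathbb N})^{\mathbb N})^n$ is $(g\cdot_{a_n}x)(0)=g(0)\cdot_a x(0)$ and $(g\cdot_{a_n}x)(k+1)=(g(k),g(k+1))\cdot_c x(k+1)$ for $k+1<n$. $X_n^{\mathrm{inj}}$ is the set of $x\in X_n$ such that $k\mapsto x(0)(k)$ is injective and, for each $1\le k<n$, $l\mapsto a^{x,l}_k$ is injective. *)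

theory Defs
  imports "HOL-Analysis.Analysis" "HOL-Library.Countable_Set_Type" "HOL-Library.Extended_Nat"
begin

(* Points of 2^N are functions nat => bool; z :: nat => nat => bool is an element of (2^N)^N;
   x :: nat => nat => nat => bool is an element of ((2^N)^N)^n with coordinates i, enat i < n,
   and value undefined at coordinates i >= n (PiE convention of product_topology). *)

type_synonym pt = "nat \<Rightarrow> nat \<Rightarrow> nat \<Rightarrow> bool"

definition cantor_top :: "(nat \<Rightarrow> bool) topology" where
  "cantor_top = product_topology (\<lambda>_. discrete_topology UNIV) UNIV"

definition seq_top :: "(nat \<Rightarrow> nat \<Rightarrow> bool) topology" where
  "seq_top = product_topology (\<lambda>_. cantor_top) UNIV"

definition space_top :: "enat \<Rightarrow> pt topology" where
  "space_top n = product_topology (\<lambda>_. seq_top) {i. enat i < n}"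

(* hereditarily countable sets over urelements from 2^N *)
datatype hset = Ur "nat \<Rightarrow> bool" | CS "hset cset"

(* elt x 0 k = x(0)(k);  elt x j l = a^{x,l}_j for j >= 1 *)
fun elt :: "pt \<Rightarrow> nat \<Rightarrow> nat \<Rightarrow> hset" where
  "elt x 0 k = Ur (x 0 k)"
| "elt x (Suc j) l = CS (acset (elt x j ` {k. x (Suc j) l k}))"

definition Aset :: "pt \<Rightarrow> nat \<Rightarrow> hset set" where
  "Aset x j = range (elt x (j - 1))"

definition Xn :: "enat \<Rightarrow> pt set" where
  "Xn n = {x \<in> topspace (space_top n).
      \<forall>i. 1 \<le> i \<and> enat i < n \<longrightarrow>
        (\<forall>m. \<exists>k. x i k m) \<and>
        (\<forall>k. \<exists>m. x i k m) \<and>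
        (\<forall>k l1 l2. x (i - 1) l1 = x (i - 1) l2 \<longrightarrow> x i k l1 = x i k l2)}"

definition Fn :: "enat \<Rightarrow> pt \<Rightarrow> pt \<Rightarrow> bool" where
  "Fn n x y \<longleftrightarrow> x \<in> Xn n \<and> y \<in> Xn n \<and>
     (case n of enat m \<Rightarrow> Aset x m = Aset y m
              | \<infinity> \<Rightarrow> (\<forall>j. 1 \<le> j \<longrightarrow> Aset x j = Aset y j))"

definition Xinj :: "enat \<Rightarrow> pt set" where
  "Xinj n = {x \<in> Xn n. inj (\<lambda>k. x 0 k) \<and>
      (\<forall>k. 1 \<le> k \<and> enat k < n \<longrightarrow> inj (elt x k))}"

definition Sinf_pow :: "enat \<Rightarrow> (nat \<Rightarrow> nat \<Rightarrow> nat) set" where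
  "Sinf_pow n = {g. \<forall>k. enat k < n \<longrightarrow> bij (g k)}"

definition act :: "enat \<Rightarrow> (nat \<Rightarrow> nat \<Rightarrow> nat) \<Rightarrow> pt \<Rightarrow> pt" where
  "act n g x = (\<lambda>i. if enat i < n then
       (if i = 0 then (\<lambda>m. x 0 (inv (g 0) m))
        else (\<lambda>m j. x i (inv (g i) m) (inv (g (i - 1)) j)))
     else undefined)"

definition nowhere_dense_in :: "'a topology \<Rightarrow> 'a set \<Rightarrow> bool" where
  "nowhere_dense_in T S \<longleftrightarrow> T interior_of (T closure_of S) = {}"

definition meager_in :: "'a topology \<Rightarrow> 'a set \<Rightarrow> bool" where
  "meager_in T S \<longleftrightarrow> (\<exists>\<F>. countable \<F> \<and> (\<forall>N\<in>\<F>. nowhere_dense_in T N) \<and> S \<subseteq> \<Union>\<F>)"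

definition comeager_in :: "'a topology \<Rightarrow> 'a set \<Rightarrow> bool" where
  "comeager_in T S \<longleftrightarrow> S \<subseteq> topspace T \<and> meager_in T (topspace T - S)"

end

theory Submission imports Defs begin

lemma top_cantor[simp]: "topspace cantor_top = UNIV"
  by (simp add: cantor_top_def)
lemma top_seq[simp]: "topspace seq_top = UNIV"
  by (simp add: seq_top_def)
lemma top_space: "topspace (space_top n) = PiE {i. enat i < n} (\<lambda>_. UNIV)"
  by (simp add: space_top_def)

lemma cont_coord:
  assumes "enat i < n"
  shows "continuous_map (space_top n) (discrete_topology UNIV) (\<lambda>x. x i k m)"
proof -
  have 1: "continuous_map (space_top n) seq_top (\<lambda>x. x i)"
    unfolding space_top_def using assms by (intro continuous_map_product_projection) auto
  have 2: "continuous_map seq_top cantor_top (\<lambda>z. z k)"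
    unfolding seq_top_def by (intro continuous_map_product_projection) auto
  have 3: "continuous_map cantor_top (discrete_topology UNIV) (\<lambda>z. z m)"
    unfolding cantor_top_def by (intro continuous_map_product_projection) auto
  show ?thesis using continuous_map_compose[OF continuous_map_compose[OF 1 2] 3]
    by (simp add: o_def)
qed

lemma limit_coord:
  assumes "x \<in> topspace (space_top n)"
    and "\<And>N. y N \<in> topspace (space_top n)"
    and "\<And>i k m. enat i < n \<Longrightarrow> eventually (\<lambda>N. y N i k m = x i k m) sequentially"
  shows "limitin (space_top n) y x sequentially"
proof -
  have "\<forall>i\<in>{i. enat i < n}. limitin seq_top (\<lambda>c. y c i) (x i) sequentially"
  proof
    fix i assume i: "i \<in> {i. enat i < n}"
    show "limitin seq_top (\<lambda>c. y c i) (x i) sequentially"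
      unfolding seq_top_def limitin_componentwise
    proof (intro conjI ballI)
      fix k
      show "limitin cantor_top (\<lambda>c. y c i k) (x i k) sequentially"
        unfolding cantor_top_def limitin_componentwise
        using i assms(3) by (auto intro!: limitin_eventually)
    qed auto
  qed
  then show ?thesis using assms(1,2) unfolding space_top_def limitin_componentwise
    by (auto simp: PiE_def)
qed


definition ynice :: "enat \<Rightarrow> pt \<Rightarrow> nat \<Rightarrow> pt" where
  "ynice n x N = (\<lambda>i. if enat i < n then (\<lambda>k m. if k < N \<and> m < N then x i k m
      else (m = 2*k+2*N \<or> k = 2*m+2*N+1)) else undefined)"

lemma ynice_rows:
  assumes "enat i < n" "k \<noteq> k'"
  shows "ynice n x N i k \<noteq> ynice n x N i k'"
proof
  assume eq: "ynice n x N i k = ynice n x N i k'"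
  show False
  proof (cases "k' = 4*k+6*N+1")
    case False
    have "ynice n x N i k (2*k+2*N) = ynice n x N i k' (2*k+2*N)" using eq by simp
    then show False using assms False by (simp add: ynice_def)
  next
    case True
    have "ynice n x N i k (2*k'+2*N) = ynice n x N i k' (2*k'+2*N)" using eq by simp
    then show False using assms True by (simp add: ynice_def)
  qed
qed

lemma ynice_top: "ynice n x N \<in> topspace (space_top n)"
  by (simp add: top_space ynice_def PiE_def extensional_def)

lemma ynice_Xn: "ynice n x N \<in> Xn n"
proof -
  have c1: "\<exists>k. ynice n x N i k m" if i: "1 \<le> i \<and> enat i < n" for i m
      using i by (intro exI[of _ "2*m+2*N+1"]) (simp add: ynice_def)
  have c2: "\<exists>m. ynice n x N i k m" if i: "1 \<le> i \<and> enat i < n" for i k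
      using i by (intro exI[of _ "2*k+2*N"]) (simp add: ynice_def)
  have c3: "ynice n x N i k l1 = ynice n x N i k l2"
    if i: "1 \<le> i \<and> enat i < n" and e: "ynice n x N (i - 1) l1 = ynice n x N (i - 1) l2" for i k l1 l2
  proof -
    have "enat (i - 1) < n" using i
      by (meson diff_le_self enat_ord_simps(1) le_less_trans)
    then have "l1 = l2" using ynice_rows[of "i - 1" n l1 l2 x N] e by blast
    then show ?thesis by simp
  qed
  show ?thesis unfolding Xn_def using c1 c2 c3 ynice_top by blast
qed

lemma ynice_lim:
  assumes "x \<in> topspace (space_top n)"
  shows "limitin (space_top n) (ynice n x) x sequentially"
proof (rule limit_coord[OF assms ynice_top])
  fix i k m assume "enat i < n"
  then show "eventually (\<lambda>N. ynice n x N i k m = x i k m) sequentially"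
    unfolding ynice_def eventually_sequentially
    by (intro exI[of _ "Suc (max k m)"]) auto
qed

definition rowS :: "enat \<Rightarrow> nat \<Rightarrow> nat \<Rightarrow> nat \<Rightarrow> pt set" where
  "rowS n i l1 l2 = {x \<in> Xn n. x i l1 = x i l2}"

lemma Xn_top: "Xn n \<subseteq> topspace (space_top n)"
  by (auto simp: Xn_def)

lemma rowS_nd:
  assumes "enat i < n" "l1 \<noteq> l2"
  shows "nowhere_dense_in (subtopology (space_top n) (Xn n)) (rowS n i l1 l2)"
  unfolding nowhere_dense_in_def
proof (rule ccontr)
  let ?T = "subtopology (space_top n) (Xn n)"
  assume "?T interior_of (?T closure_of rowS n i l1 l2) \<noteq> {}"
  then obtain x W where W: "openin ?T W" "x \<in> W" "W \<subseteq> ?T closure_of rowS n i l1 l2"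
    unfolding interior_of_def by blast
  then obtain Op where O: "openin (space_top n) Op" "W = Op \<inter> Xn n"
    by (auto simp: openin_subtopology)
  have xt: "x \<in> topspace (space_top n)" using W O Xn_top by blast
  have "eventually (\<lambda>N. ynice n x N \<in> Op) sequentially"
    using limitinD[OF ynice_lim[OF xt] O(1)] W O by blast
  then obtain N where yO: "ynice n x N \<in> Op" by (auto simp: eventually_sequentially)
  define y where "y = ynice n x N"
  have yW: "y \<in> W" using yO O ynice_Xn y_def by blast
  have "y i l1 \<noteq> y i l2" using ynice_rows assms y_def by blast
  then obtain m where km: "y i l1 m \<noteq> y i l2 m" by (auto simp: fun_eq_iff)
  define V where "V = {z \<in> topspace (space_top n). z i l1 m = y i l1 m}
     \<inter> {z \<in> topspace (space_top n). z i l2 m = y i l2 m}"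
  have op: "openin (space_top n) {z \<in> topspace (space_top n). z i l m = b}" for l b
    using openin_continuous_map_preimage[OF cont_coord[OF assms(1), of l m], of "{b}"] by simp
  have "openin (space_top n) V"
    unfolding V_def by (intro openin_Int op)
  then have opT: "openin ?T (V \<inter> Xn n)" by (auto simp: openin_subtopology)
  have yV: "y \<in> V \<inter> Xn n" using yW O Xn_top unfolding V_def by auto
  have ycl: "y \<in> ?T closure_of rowS n i l1 l2" using yW W(3) by (rule subsetD[rotated])
  have "\<forall>T. y \<in> T \<and> openin ?T T \<longrightarrow> (\<exists>z. z \<in> rowS n i l1 l2 \<and> z \<in> T)"
    using ycl unfolding in_closure_of by (rule conjunct2)
  then have "\<exists>z. z \<in> rowS n i l1 l2 \<and> z \<in> V \<inter> Xn n"
    using yV opT by blast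
  then obtain z where "z \<in> rowS n i l1 l2" "z \<in> V \<inter> Xn n" by blast
  then show False using km unfolding V_def rowS_def by auto
qed

lemma elt_inj:
  assumes "\<And>j l1 l2. j \<le> k \<Longrightarrow> x j l1 = x j l2 \<Longrightarrow> l1 = l2"
  shows "inj (elt x k)"
  using assms
proof (induction k)
  case 0
  then show ?case by (auto simp: inj_def)
next
  case (Suc k)
  have ih: "inj (elt x k)" by (rule Suc.IH) (rule Suc.prems; auto)
  show ?case
  proof (rule injI)
    fix l1 l2 assume "elt x (Suc k) l1 = elt x (Suc k) l2"
    then have "elt x k ` {j. x (Suc k) l1 j} = elt x k ` {j. x (Suc k) l2 j}"
      by simp
    then have "{j. x (Suc k) l1 j} = {j. x (Suc k) l2 j}"
      using ih by (simp add: inj_image_eq_iff)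
    then have "x (Suc k) l1 = x (Suc k) l2" by auto
    then show "l1 = l2" using Suc.prems by blast
  qed
qed

lemma comeager_part:
  assumes "1 \<le> n"
  shows "comeager_in (subtopology (space_top n) (Xn n)) (Xinj n)"
proof -
  let ?T = "subtopology (space_top n) (Xn n)"
  let ?F = "(\<lambda>(i,l1,l2). rowS n i l1 l2) ` {(i,l1,l2). enat i < n \<and> l1 \<noteq> l2}"
  have ts: "topspace ?T = Xn n" using Xn_top by auto
  have "countable ?F" by (intro countable_image) (rule countable_subset[of _ UNIV], auto)
  moreover have "\<forall>N\<in>?F. nowhere_dense_in ?T N" using rowS_nd by auto
  moreover have "topspace ?T - Xinj n \<subseteq> \<Union>?F"
  proof
    fix x assume x: "x \<in> topspace ?T - Xinj n"
    then have xX: "x \<in> Xn n" using ts by auto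
    show "x \<in> \<Union>?F"
    proof (rule ccontr)
      assume nF: "x \<notin> \<Union>?F"
      have rows: "x j l1 = x j l2 \<Longrightarrow> l1 = l2" if "enat j < n" for j l1 l2
      proof (rule ccontr)
        assume "x j l1 = x j l2" "l1 \<noteq> l2"
        then have "x \<in> rowS n j l1 l2" using xX by (simp add: rowS_def)
        then show False using nF that \<open>l1 \<noteq> l2\<close> by blast
      qed
      have "0 < n" using assms by (cases n) auto
      then have "inj (\<lambda>k. x 0 k)" using rows by (metis injI enat_0)
      moreover have "inj (elt x k)" if "1 \<le> k \<and> enat k < n" for k
        using that rows by (intro elt_inj) (meson enat_ord_simps(1) le_less_trans)
      ultimately have "x \<in> Xinj n" using xX by (simp add: Xinj_def)
      then show False using x by blast
    qed
  qed
  ultimately have "meager_in ?T (topspace ?T - Xinj n)"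
    unfolding meager_in_def by blast
  then show ?thesis
    unfolding comeager_in_def using ts by (auto simp: Xinj_def)
qed


lemma image_surj_comp:
  assumes "surj h"
  shows "(\<lambda>j. f (h j)) ` {j. P (h j)} = f ` {j. P j}"
proof -
  have "h ` {j. P (h j)} = {j. P j}"
  proof
    show "{j. P j} \<subseteq> h ` {j. P (h j)}"
    proof
      fix j assume "j \<in> {j. P j}"
      moreover obtain j' where "j = h j'" using assms by (metis surjD)
      ultimately show "j \<in> h ` {j. P (h j)}" by auto
    qed
  qed auto
  then show ?thesis by (metis image_image)
qed

lemma enat_less_pred: "enat (Suc k) < n \<Longrightarrow> enat k < n"
  by (meson Suc_n_not_le_n enat_ord_simps(1) le_less_trans nat_le_linear)

lemma elt_act:
  assumes "enat k < n" "\<forall>j. enat j < n \<longrightarrow> bij (g j)"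
  shows "elt (act n g x) k l = elt x k (inv (g k) l)"
  using assms(1)
proof (induction k arbitrary: l)
  case 0
  then show ?case by (simp add: act_def)
next
  case (Suc k)
  have k: "enat k < n" using Suc.prems by (rule enat_less_pred)
  have s: "surj (inv (g k))" using assms(2) k by (simp add: bij_imp_bij_inv bij_is_surj)
  have "elt (act n g x) (Suc k) l =
      CS (acset ((\<lambda>j. elt x k (inv (g k) j)) ` {j. x (Suc k) (inv (g (Suc k)) l) (inv (g k) j)}))"
    using Suc.prems Suc.IH[OF k] by (simp add: act_def)
  also have "\<dots> = CS (acset (elt x k ` {j. x (Suc k) (inv (g (Suc k)) l) j}))"
    by (simp only: image_surj_comp[OF s])
  finally show ?case by simp
qed

lemma act_Xinj:
  assumes n1: "1 \<le> n" and g: "g \<in> Sinf_pow n" and x: "x \<in> Xinj n"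
  shows "act n g x \<in> Xinj n"
proof -
  let ?y = "act n g x"
  have bg: "\<And>j. enat j < n \<Longrightarrow> bij (g j)" using g by (simp add: Sinf_pow_def)
  have xX: "x \<in> Xn n" using x by (simp add: Xinj_def)
  have pm1: "enat (i - 1) < n" if "enat i < n" for i
    using that by (meson diff_le_self enat_ord_simps(1) le_less_trans)
  have invg: "inv (g j) (g j a) = a" if "enat j < n" for j a
    using bg[OF that] by (simp add: bij_is_inj)
  have ginv: "g j (inv (g j) a) = a" if "enat j < n" for j a
    using bg[OF that] by (simp add: bij_is_surj surj_f_inv_f)
  have top: "?y \<in> topspace (space_top n)"
    by (simp add: top_space act_def PiE_def extensional_def)
  have c1: "\<exists>k. ?y i k m" if i: "1 \<le> i \<and> enat i < n" for i m
  proof -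
    obtain k where "x i k (inv (g (i - 1)) m)" using xX i unfolding Xn_def by blast
    then show ?thesis using i invg
      by (intro exI[of _ "g i k"]) (simp add: act_def)
  qed
  have c2: "\<exists>m. ?y i k m" if i: "1 \<le> i \<and> enat i < n" for i k
  proof -
    obtain m where "x i (inv (g i) k) m" using xX i unfolding Xn_def by blast
    then show ?thesis using i invg pm1[of i]
      by (intro exI[of _ "g (i - 1) m"]) (simp add: act_def)
  qed
  have c3: "?y i k l1 = ?y i k l2"
    if i: "1 \<le> i \<and> enat i < n" and e: "?y (i - 1) l1 = ?y (i - 1) l2" for i k l1 l2
  proof -
    have i1: "enat (i - 1) < n" using pm1 i by blast
    have "x (i - 1) (inv (g (i - 1)) l1) = x (i - 1) (inv (g (i - 1)) l2)"
    proof (cases "i - 1 = 0")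
      case True
      then show ?thesis using e i1 by (simp add: act_def fun_eq_iff)
    next
      case False
      have i2: "enat (i - 1 - 1) < n" using pm1 i1 by blast
      show ?thesis
      proof
        fix j
        have "?y (i - 1) l1 (g (i - 1 - 1) j) = ?y (i - 1) l2 (g (i - 1 - 1) j)" using e by simp
        then show "x (i - 1) (inv (g (i - 1)) l1) j = x (i - 1) (inv (g (i - 1)) l2) j"
          using False i1 invg[OF i2] by (simp add: act_def)
      qed
    qed
    then have "x i k' (inv (g (i - 1)) l1) = x i k' (inv (g (i - 1)) l2)" for k'
      using xX i unfolding Xn_def by blast
    then show ?thesis using i by (simp add: act_def)
  qed
  have yX: "?y \<in> Xn n" unfolding Xn_def using c1 c2 c3 top by blast
  have n0: "enat 0 < n" using n1 by (cases n) (auto simp: one_enat_def)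
  have i0: "inj (\<lambda>k. ?y 0 k)"
  proof -
    have a: "inj (x 0)" using x by (simp add: Xinj_def)
    have b: "inj (inv (g 0))" using bg[OF n0] by (simp add: bij_imp_bij_inv bij_is_inj)
    have "inj (x 0 \<circ> inv (g 0))" using a b by (rule inj_compose)
    then have "inj (\<lambda>k. x 0 (inv (g 0) k))" by (simp add: o_def)
    then show ?thesis using n0 by (simp add: act_def)
  qed
  have ik: "inj (elt ?y k)" if k: "1 \<le> k \<and> enat k < n" for k
  proof -
    have a: "inj (elt x k)" using x k by (simp add: Xinj_def)
    have b: "inj (inv (g k))" using bg k by (simp add: bij_imp_bij_inv bij_is_inj)
    have "inj (elt x k \<circ> inv (g k))" using a b by (rule inj_compose)
    then have "inj (\<lambda>l. elt x k (inv (g k) l))" by (simp add: o_def)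
    moreover have "elt ?y k = (\<lambda>l. elt x k (inv (g k) l))"
      using elt_act[of k n g x] k bg by blast
    ultimately show ?thesis by simp
  qed
  show ?thesis using yX i0 ik by (simp add: Xinj_def)
qed


fun mem :: "hset \<Rightarrow> hset set" where
  "mem (Ur _) = {}"
| "mem (CS s) = rcset s"

lemma mem_elt: "mem (elt x (Suc k) l) = elt x k ` {j. x (Suc k) l j}"
  by simp

lemma range_down:
  assumes "x \<in> Xn n" "enat (Suc k) < n"
  shows "range (elt x k) = (\<Union>l. mem (elt x (Suc k) l))"
proof
  show "(\<Union>l. mem (elt x (Suc k) l)) \<subseteq> range (elt x k)" by auto
  show "range (elt x k) \<subseteq> (\<Union>l. mem (elt x (Suc k) l))"
  proof
    fix a assume "a \<in> range (elt x k)"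
    then obtain m where a: "a = elt x k m" by blast
    have "\<forall>i. 1 \<le> i \<and> enat i < n \<longrightarrow> (\<forall>m. \<exists>k. x i k m)"
      using assms(1) unfolding Xn_def by blast
    then have "\<forall>m. \<exists>l. x (Suc k) l m" using assms(2) by (metis le_add1 plus_1_eq_Suc)
    then obtain l where "x (Suc k) l m" by blast
    then show "a \<in> (\<Union>l. mem (elt x (Suc k) l))" using a by auto
  qed
qed

lemma range_step:
  assumes "x \<in> Xn n" "y \<in> Xn n" "enat (Suc k) < n"
    "range (elt x (Suc k)) = range (elt y (Suc k))"
  shows "range (elt x k) = range (elt y k)"
proof -
  have a: "range (elt x k) = \<Union> (mem ` range (elt x (Suc k)))"
    unfolding image_image by (rule range_down[OF assms(1,3)])
  have b: "range (elt y k) = \<Union> (mem ` range (elt y (Suc k)))"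
    unfolding image_image by (rule range_down[OF assms(2,3)])
  show ?thesis by (simp only: a b assms(4))
qed

lemma ranges_from_Fn:
  assumes "Fn n x y"
  shows "\<forall>k. enat k < n \<longrightarrow> range (elt x k) = range (elt y k)"
proof (cases n)
  case (enat m)
  have xX: "x \<in> Xn n" and yX: "y \<in> Xn n" using assms by (auto simp: Fn_def)
  have top: "range (elt x (m - 1)) = range (elt y (m - 1))"
    using assms enat by (simp add: Fn_def Aset_def)
  have R: "range (elt x (m - 1 - d)) = range (elt y (m - 1 - d))" for d
  proof (induction d)
    case 0 then show ?case using top by simp
  next
    case (Suc d)
    show ?case
    proof (cases "d < m - 1")
      case True
      have e: "Suc (m - 1 - Suc d) = m - 1 - d" using True by simp
      have "enat (Suc (m - 1 - Suc d)) < n" using True enat e by simp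
      moreover have "range (elt x (Suc (m - 1 - Suc d))) = range (elt y (Suc (m - 1 - Suc d)))"
        by (subst e)+ (rule Suc.IH)
      ultimately show ?thesis by (rule range_step[OF xX yX])
    next
      case False
      then have "m - 1 - Suc d = m - 1 - d" by simp
      then show ?thesis using Suc by simp
    qed
  qed
  show ?thesis
  proof (intro allI impI)
    fix k assume "enat k < n"
    then have "k < m" using enat by simp
    then have "m - 1 - (m - 1 - k) = k" by simp
    then show "range (elt x k) = range (elt y k)" using R[of "m - 1 - k"] by simp
  qed
next
  case infinity
  have "\<forall>j\<ge>1. range (elt x (j - 1)) = range (elt y (j - 1))"
    using assms infinity by (simp add: Fn_def Aset_def)
  then have "range (elt x (Suc k - 1)) = range (elt y (Suc k - 1))" for k
    by (metis le_add1 plus_1_eq_Suc)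
  then show ?thesis by simp
qed


lemma Xinj_inj:
  assumes "x \<in> Xinj n" "enat k < n"
  shows "inj (elt x k)"
proof (cases k)
  case 0
  have "inj (x 0)" using assms by (simp add: Xinj_def)
  then show ?thesis using 0 by (simp add: inj_def)
next
  case (Suc k')
  then show ?thesis using assms by (simp add: Xinj_def)
qed

lemma orbit_of_ranges:
  assumes x: "x \<in> Xinj n" and y: "y \<in> Xinj n"
    and R: "\<And>k. enat k < n \<Longrightarrow> range (elt x k) = range (elt y k)"
  shows "\<exists>g\<in>Sinf_pow n. act n g x = y"
proof -
  define h where "h k l = inv (elt x k) (elt y k l)" for k l
  define g where "g k = inv (h k)" for k
  have key: "elt x k (h k l) = elt y k l" if "enat k < n" for k l
    unfolding h_def using R[OF that] by (metis f_inv_into_f rangeI)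
  have hinj: "inj (h k)" if k: "enat k < n" for k
  proof (rule injI)
    fix a b assume "h k a = h k b"
    then have "elt y k a = elt y k b" using key[OF k] by metis
    then show "a = b" using Xinj_inj[OF y k] by (simp add: inj_def)
  qed
  have hsurj: "surj (h k)" if k: "enat k < n" for k
  proof -
    have "l \<in> range (h k)" for l
    proof -
      have "elt x k l \<in> range (elt y k)" using R[OF k] by blast
      then obtain a where a: "elt x k l = elt y k a" by blast
      have "h k a = l" unfolding h_def a[symmetric] using Xinj_inj[OF x k] by simp
      then show ?thesis by blast
    qed
    then show ?thesis by blast
  qed
  have hbij: "bij (h k)" if "enat k < n" for k using hinj hsurj that by (simp add: bij_def)
  have ginv: "inv (g k) = h k" if "enat k < n" for k
    unfolding g_def using hbij[OF that] by (simp add: inv_inv_eq)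
  have gS: "g \<in> Sinf_pow n"
    unfolding Sinf_pow_def g_def using hbij by (simp add: bij_imp_bij_inv)
  have yX: "y \<in> topspace (space_top n)" using y by (simp add: Xinj_def Xn_def)
  have "act n g x = y"
  proof
    fix i
    show "act n g x i = y i"
    proof (cases "enat i < n")
      case False
      then show ?thesis using yX by (simp add: act_def top_space PiE_def extensional_def)
    next
      case True
      note i = True
      show ?thesis
      proof (cases i)
        case 0
        show ?thesis
        proof
          fix m
          have "Ur (x 0 (h 0 m)) = Ur (y 0 m)" using key[of 0 m] i 0 by simp
          then show "act n g x i m = y i m" using i 0 ginv by (simp add: act_def)
        qed
      next
        case (Suc i')
        have i': "enat i' < n" using i Suc enat_less_pred by blast
        show ?thesis
        proof (intro ext)
          fix m j
          let ?A = "{j. x i (h i m) j}" and ?B = "{j. y i m j}"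
          have "CS (acset (elt x i' ` ?A)) = CS (acset (elt y i' ` ?B))"
            using key[OF i, of m] Suc by simp
          then have "elt x i' ` ?A = elt y i' ` ?B" by simp
          also have "elt y i' ` ?B = elt x i' ` (h i' ` ?B)"
            using key[OF i'] by (simp add: image_image)
          finally have "?A = h i' ` ?B" using Xinj_inj[OF x i'] by (simp add: inj_image_eq_iff)
          then have "x i (h i m) (h i' j) \<longleftrightarrow> h i' j \<in> h i' ` ?B" by blast
          also have "\<dots> \<longleftrightarrow> j \<in> ?B" using hinj[OF i'] by (rule inj_image_mem_iff)
          finally have "x i (h i m) (h i' j) \<longleftrightarrow> y i m j" by simp
          then show "act n g x i m j = y i m j"
            using i Suc ginv[OF i] ginv[OF i'] by (simp add: act_def)
        qed
      qed
    qed
  qed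
  then show ?thesis using gS by blast
qed

lemma ranges_of_act:
  assumes "g \<in> Sinf_pow n" "enat k < n"
  shows "range (elt (act n g x) k) = range (elt x k)"
proof -
  have bg: "\<forall>j. enat j < n \<longrightarrow> bij (g j)" using assms(1) by (simp add: Sinf_pow_def)
  have e: "elt (act n g x) k = elt x k \<circ> inv (g k)"
    using elt_act[OF assms(2) bg] by (simp add: fun_eq_iff)
  have s: "surj (inv (g k))" using bg assms(2) by (simp add: bij_imp_bij_inv bij_is_surj)
  have "range (elt (act n g x) k) = elt x k ` range (inv (g k))"
    by (simp only: e image_comp)
  then show ?thesis using s by simp
qed

lemma Fn_of_ranges:
  assumes "1 \<le> n" "x \<in> Xn n" "y \<in> Xn n"
    and R: "\<And>k. enat k < n \<Longrightarrow> range (elt x k) = range (elt y k)"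
  shows "Fn n x y"
proof (cases n)
  case (enat m)
  then have "m - 1 < m" using assms(1) by (simp add: one_enat_def)
  then show ?thesis using assms enat R[of "m - 1"] by (simp add: Fn_def Aset_def)
next
  case infinity
  then show ?thesis using assms R by (simp add: Fn_def Aset_def)
qed

theorem mainTheorem4:
  fixes n :: enat
  assumes "1 \<le> n"
  shows "comeager_in (subtopology (space_top n) (Xn n)) (Xinj n)
    \<and> (\<forall>g\<in>Sinf_pow n. \<forall>x\<in>Xinj n. act n g x \<in> Xinj n)
    \<and> (\<forall>x\<in>Xinj n. \<forall>y\<in>Xinj n. (\<exists>g\<in>Sinf_pow n. act n g x = y) \<longleftrightarrow> Fn n x y)"
proof (intro conjI ballI)
  show "comeager_in (subtopology (space_top n) (Xn n)) (Xinj n)"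
    by (rule comeager_part[OF assms])
next
  fix g x assume "g \<in> Sinf_pow n" "x \<in> Xinj n"
  then show "act n g x \<in> Xinj n" by (rule act_Xinj[OF assms])
next
  fix x y assume x: "x \<in> Xinj n" and y: "y \<in> Xinj n"
  have xX: "x \<in> Xn n" and yX: "y \<in> Xn n" using x y by (auto simp: Xinj_def)
  show "(\<exists>g\<in>Sinf_pow n. act n g x = y) \<longleftrightarrow> Fn n x y"
  proof
    assume "\<exists>g\<in>Sinf_pow n. act n g x = y"
    then obtain g where g: "g \<in> Sinf_pow n" "act n g x = y" by blast
    show "Fn n x y"
      using Fn_of_ranges[OF assms xX yX] ranges_of_act[OF g(1)] g(2) by metis
  next
    assume "Fn n x y"
    then show "\<exists>g\<in>Sinf_pow n. act n g x = y"
      using orbit_of_ranges[OF x y] ranges_from_Fn by blast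
  qed
qed

end
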